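(* Let $a<b$ be real numbers and let $f:[a,b]\to\mathbb{R}$ be continuous on $[a,b]$ and differentiable on $(a,b)$. If $c,\xi_c$ satisfy $a<\xi_c<c<b$ and $f'(\xi_c)=\frac{f(c)-f(a)}{c-a}$, then there exists $\xi_b\in[\xi_c,b)$ such that $f'(\xi_b)=\frac{f(b)-f(a)}{b-a}$. *)

theory Defs
  imports "HOL-Analysis.Analysis"
begin

end

theory Submission
  imports Defs
begin

lemma helper:
  fixes g g' :: "real \<Rightarrow> real"
  assumes "p < c" "c < b" "continuous_on {p..b} g"
    and "\<And>x. x \<in> {p..<b} \<Longrightarrow> (g has_real_derivative g' x) (at x)"
    and "g' p > 0" "g c > g b"
  shows "\<exists>x\<in>{p<..<b}. g' x = 0"
proof -
  obtain x0 where x0: "x0 \<in> {p..b}" "\<And>y. y \<in> {p..b} \<Longrightarrow> g y \<le> g x0"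
    using continuous_attains_sup[of "{p..b}" g] assms by force
  have "g c \<le> g x0" using x0 assms by auto
  hence nb: "x0 \<noteq> b" using assms by auto
  obtain d where d: "d > 0" "\<And>h. h > 0 \<Longrightarrow> h < d \<Longrightarrow> g p < g (p + h)"
    using DERIV_pos_inc_right[OF assms(4)[of p] assms(5)] assms by force
  define h where "h = min (d/2) ((b-p)/2)"
  have "h > 0" "h < d" using d assms by (auto simp: h_def)
  hence "g p < g (p+h)" using d by auto
  moreover have "h \<le> (b-p)/2" unfolding h_def by (rule min.cobounded2)
  moreover have "p + h \<in> {p..b}" using \<open>h>0\<close> \<open>h \<le> (b-p)/2\<close> assms by auto
  ultimately have np: "x0 \<noteq> p" using x0(2)[of "p+h"] by auto
  have xin: "x0 \<in> {p<..<b}" using x0 nb np by auto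
  have "g' x0 = 0"
  proof (rule DERIV_local_max[OF assms(4)[of x0]])
    show "x0 \<in> {p..<b}" using xin by auto
    show "0 < min (x0 - p) (b - x0)" using xin by auto
    show "\<forall>y. \<bar>x0 - y\<bar> < min (x0 - p) (b - x0) \<longrightarrow> g y \<le> g x0"
    proof (intro allI impI)
      fix y assume "\<bar>x0 - y\<bar> < min (x0 - p) (b - x0)"
      hence "y \<in> {p..b}" by (auto simp: abs_less_iff)
      thus "g y \<le> g x0" by (rule x0(2))
    qed
  qed
  thus ?thesis using xin by auto
qed

theorem theorem6:
  fixes f f' :: "real \<Rightarrow> real" and a b c \<xi>c :: real
  assumes "a < b"
    and "continuous_on {a..b} f"
    and "\<And>x. x \<in> {a<..<b} \<Longrightarrow> (f has_real_derivative f' x) (at x)"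
    and "a < \<xi>c" and "\<xi>c < c" and "c < b"
    and "f' \<xi>c = (f c - f a) / (c - a)"
  shows "\<exists>\<xi>b \<in> {\<xi>c..<b}. f' \<xi>b = (f b - f a) / (b - a)"
proof -
  define m where "m = (f b - f a) / (b - a)"
  define g where "g x = f x - f a - m * (x - a)" for x
  have gb: "g b = 0" using assms(1) by (simp add: g_def m_def field_simps)
  have gd: "(g has_real_derivative (f' x - m)) (at x)" if "x \<in> {a<..<b}" for x
    unfolding g_def using assms(3)[OF that]
    by (auto intro!: derivative_eq_intros)
  have gcont: "continuous_on {a..b} g" unfolding g_def
    using assms(2) by (intro continuous_intros) auto
  have gxi: "f' \<xi>c - m = g c / (c - a)"
    using assms by (simp add: g_def field_simps)
  have ca: "c - a > 0" using assms by auto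
  have sub: "{\<xi>c..b} \<subseteq> {a..b}" using assms by auto
  consider "g c = 0" | "g c > 0" | "g c < 0" by linarith
  then obtain x where x: "x \<in> {\<xi>c..<b}" "f' x - m = 0"
  proof cases
    case 1
    have cc: "continuous_on {c..b} g" by (rule continuous_on_subset[OF gcont]) (use assms in auto)
    have dd: "g differentiable (at x)" if "c < x" "x < b" for x
      using gd[of x] that assms real_differentiable_def by auto
    obtain l z where z: "c < z" "z < b" "DERIV g z :> l" "g b - g c = (b - c) * l"
      using MVT[OF assms(6) cc dd] by blast
    have "l = f' z - m" using DERIV_unique[OF z(3) gd[of z]] z assms by auto
    hence "f' z - m = 0" using z 1 gb assms by simp
    thus ?thesis using that[of z] z assms by auto
  next
    case 2
    have "\<exists>x\<in>{\<xi>c<..<b}. f' x - m = 0"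
      apply (rule helper[of \<xi>c c b g])
      using assms gcont gd sub 2 gb gxi ca by (auto intro: continuous_on_subset)
    then obtain x where "x\<in>{\<xi>c<..<b}" "f' x - m = 0" by blast
    thus ?thesis using that[of x] by auto
  next
    case 3
    have gd2: "((\<lambda>x. - g x) has_real_derivative - (f' x - m)) (at x)" if "x \<in> {\<xi>c..<b}" for x
      using DERIV_minus[OF gd[of x]] that assms by auto
    have "\<exists>x\<in>{\<xi>c<..<b}. - (f' x - m) = 0"
      apply (rule helper[of \<xi>c c b "\<lambda>x. - g x"])
      using assms gcont gd2 sub 3 gb gxi ca
      by (auto intro: continuous_on_subset continuous_intros simp: divide_less_0_iff)
    then obtain x where "x\<in>{\<xi>c<..<b}" "- (f' x - m) = 0" by blast
    thus ?thesis using that[of x] by auto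
  qed
  thus ?thesis unfolding m_def by auto
qed

end
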